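(* If $M,M'\in\mathrm{Mat}(2,\mathbb{Z})$ are conjugate via a matrix in $\mathrm{GL}(2,\mathbb{Z})$, then $\mathrm{mgcd}(M')=\mathrm{mgcd}(M)$. In particular, the matrix gcd is constant on the conjugacy classes of $\mathrm{GL}(2,\mathbb{Z})$.
   Context: For $M=\begin{pmatrix}a&b\\c&d\end{pmatrix}\in\mathrm{Mat}(2,\mathbb{Z})$, the matrix gcd is $\mathrm{mgcd}(M)=\gcd(b,c,d-a)$, taken as a non-negative integer, with $\mathrm{mgcd}(M)=0$ when $b=c=d-a=0$. *)

theory Defs
  imports "HOL-Analysis.Analysis"
begin

text \<open>2x2 integer matrices are rendered as int^2^2; entries M $ 1 $ 1 = a, M $ 1 $ 2 = b,
  M $ 2 $ 1 = c, M $ 2 $ 2 = d.\<close>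

definition mgcd :: "int^2^2 \<Rightarrow> int" where
  "mgcd M = gcd (gcd (M $ 1 $ 2) (M $ 2 $ 1)) (M $ 2 $ 2 - M $ 1 $ 1)"

definition GL2Z :: "(int^2^2) set" where
  "GL2Z = {P. \<exists>Q::int^2^2. P ** Q = mat 1 \<and> Q ** P = mat 1}"

definition conj_GL2Z :: "int^2^2 \<Rightarrow> int^2^2 \<Rightarrow> bool" where
  "conj_GL2Z M M' \<longleftrightarrow> (\<exists>P\<in>GL2Z. \<exists>Q. P ** Q = mat 1 \<and> Q ** P = mat 1 \<and> M' = P ** M ** Q)"

end

theory Submission
  imports Defs
begin

lemma dvd_mult_entries:
  fixes A N :: "int^2^2"
  assumes "\<And>i j. g dvd N $ i $ j"
  shows "g dvd (A ** N) $ i $ j" "g dvd (N ** A) $ i $ j"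
   apply (simp add: matrix_matrix_mult_def, rule dvd_sum, rule dvd_mult, rule assms)
  apply (simp add: matrix_matrix_mult_def, rule dvd_sum, rule dvd_mult2, rule assms)
  done

lemma matrix_add_rdist: "((B + C) ** A) = (B ** A) + (C ** (A::int^2^2))"
  by (simp add: matrix_matrix_mult_def vec_eq_iff distrib_right sum.distrib)

lemma mgcd_dvd:
  fixes M P Q :: "int^2^2"
  assumes "P ** Q = mat 1"
  shows "mgcd M dvd mgcd (P ** M ** Q)"
proof -
  define a where "a = M $ 1 $ 1"
  define N where "N = M - mat a"
  define g where "g = mgcd M"
  have N: "g dvd N $ i $ j" for i j
    using exhaust_2[of i] exhaust_2[of j]
    by (auto simp: N_def g_def mgcd_def a_def mat_def intro: dvd_trans[OF gcd_dvd1])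
  have "P ** M ** Q = P ** N ** Q + P ** mat a ** Q"
  proof -
    have "M = N + mat a" by (simp add: N_def)
    hence "P ** M ** Q = P ** (N + mat a) ** Q" by simp
    thus ?thesis by (simp only: matrix_add_ldistrib matrix_add_rdist)
  qed
  also have "P ** mat a ** Q = mat a"
  proof -
    have "P ** mat a = mat a ** P"
      by (simp add: matrix_matrix_mult_def mat_def vec_eq_iff if_distrib[of "\<lambda>x. _ * x"] if_distrib[of "\<lambda>x. x * _"] sum.delta sum.delta' mult.commute cong: if_cong)
    hence "P ** mat a ** Q = mat a ** (P ** Q)" by (simp add: matrix_mul_assoc)
    thus ?thesis using assms by (simp add: matrix_mul_rid)
  qed
  finally have eq: "P ** M ** Q = P ** N ** Q + mat a" .
  have D: "g dvd (P ** N ** Q) $ i $ j" for i j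
    by (rule dvd_mult_entries(2), rule dvd_mult_entries(1), rule N)
  have "mgcd (P ** M ** Q) = gcd (gcd ((P ** N ** Q) $ 1 $ 2) ((P ** N ** Q) $ 2 $ 1))
     ((P ** N ** Q) $ 2 $ 2 - (P ** N ** Q) $ 1 $ 1)"
    unfolding eq mgcd_def by (simp add: mat_def)
  thus ?thesis unfolding g_def[symmetric]
    using D by (simp add: dvd_diff)
qed

theorem lemma29:
  fixes M M' :: "int^2^2"
  assumes "conj_GL2Z M M'"
  shows "mgcd M' = mgcd M"
proof -
  obtain P Q where PQ: "P ** Q = mat 1" "Q ** P = mat 1" and M': "M' = P ** M ** Q"
    using assms unfolding conj_GL2Z_def by blast
  have 1: "mgcd M dvd mgcd M'" using mgcd_dvd[OF PQ(1)] M' by simp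
  have "M = Q ** M' ** P" using PQ M' by (simp add: matrix_mul_assoc[symmetric] matrix_mul_lid matrix_mul_rid) (simp add: matrix_mul_assoc matrix_mul_rid)
  hence 2: "mgcd M' dvd mgcd M" using mgcd_dvd[OF PQ(2), of M'] by simp
  show ?thesis using 1 2 by (simp add: mgcd_def zdvd_antisym_nonneg)
qed

end
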